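(* For every integer $t\ge 2$ and every positive integer $d$, \[ g\Big(1+\frac{d}{t},t\Big)\le \frac{(2d+1)t+d^2}{(t+d)(2d+1)} = 1-\frac{d^2+d}{(t+d)(2d+1)}. \]
   Context: Let $\mathbb{F}$ be a finite field and $x_1,\dots,x_p$ a basis of $\mathbb{F}^p$. A $[t\times m,p]$ array code is a $t\times m$ array whose entries (cells) are linear combinations of $x_1,\dots,x_p$; its columns are called servers. It has the $k$-PIR property (is a $[t\times m,p]$ $k$-PIR array code) if for every $i\in\{1,\dots,p\}$ there exist $k$ pairwise disjoint sets $S_1,\dots,S_k$ of columns such that for every $j$ the vector $x_i$ lies in the linear span of all entries of the columns in $S_j$. Its PIR rate is $k/m$. For a rational $s>1$ and a positive integer $t$ with $st$ an integer, $g(s,t)$ is the largest PIR rate $k/m$ of a $[t\times m,st]$ $k$-PIR array code (over all finite fields, all $m$ and all $k$). *)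

theory Defs
  imports Complex_Main
begin

text \<open>A [t x m, p] array code over a field 'a: cell (r,c) with r < t, c < m holds the
  linear combination  sum_{l<p} C r c l * x_l  of the basis vectors x_0,...,x_{p-1}
  (basis vectors indexed from 0 instead of 1); C r c is its coefficient vector.\<close>

definition in_col_span ::
  "(nat \<Rightarrow> nat \<Rightarrow> nat \<Rightarrow> 'a::field) \<Rightarrow> nat \<Rightarrow> nat \<Rightarrow> nat set \<Rightarrow> nat \<Rightarrow> bool" where
  "in_col_span C t p S i \<longleftrightarrow>
     (\<exists>coef::nat \<Rightarrow> nat \<Rightarrow> 'a. \<forall>l<p.
        (\<Sum>c\<in>S. \<Sum>r<t. coef r c * C r c l) = (if l = i then 1 else 0))"

definition is_pir_array_code ::
  "(nat \<Rightarrow> nat \<Rightarrow> nat \<Rightarrow> 'a::field) \<Rightarrow> nat \<Rightarrow> nat \<Rightarrow> nat \<Rightarrow> nat \<Rightarrow> bool" where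
  "is_pir_array_code C t m p k \<longleftrightarrow>
     (\<forall>i<p. \<exists>S::nat \<Rightarrow> nat set.
        (\<forall>j<k. S j \<subseteq> {..<m}) \<and>
        (\<forall>j<k. \<forall>j'<k. j \<noteq> j' \<longrightarrow> S j \<inter> S j' = {}) \<and>
        (\<forall>j<k. in_col_span C t p (S j) i))"

definition pir_g :: "'a::{finite,field} itself \<Rightarrow> rat \<Rightarrow> nat \<Rightarrow> real" where
  "pir_g _ s t = Sup {real k / real m | k m (C :: nat \<Rightarrow> nat \<Rightarrow> nat \<Rightarrow> 'a).
      0 < m \<and> 0 < k \<and> is_pir_array_code C t m (nat \<lfloor>s * of_nat t\<rfloor>) k}"

end

theory Submission
  imports Defs "HOL-Library.Function_Algebras"
begin

definition vscale :: "'a::field \<Rightarrow> (nat \<Rightarrow> 'a) \<Rightarrow> (nat \<Rightarrow> 'a)" where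
  "vscale c f = (\<lambda>l. c * f l)"

interpretation vs: vector_space vscale
  by unfold_locales (auto simp: vscale_def fun_eq_iff algebra_simps)

lemma sum_fun_app: "(\<Sum>x\<in>A. f x) (l::nat) = (\<Sum>x\<in>A. f x l)"
  by (induction A rule: infinite_finite_induct) auto

definition vecC :: "(nat \<Rightarrow> nat \<Rightarrow> nat \<Rightarrow> 'a::field) \<Rightarrow> nat \<Rightarrow> nat \<Rightarrow> nat \<Rightarrow> (nat \<Rightarrow> 'a)" where
  "vecC C p c r = (\<lambda>l. if l < p then C r c l else 0)"

definition ev :: "nat \<Rightarrow> (nat \<Rightarrow> 'a::field)" where
  "ev i = (\<lambda>l. if l = i then 1 else 0)"

definition cols :: "(nat \<Rightarrow> nat \<Rightarrow> nat \<Rightarrow> 'a::field) \<Rightarrow> nat \<Rightarrow> nat \<Rightarrow> nat set \<Rightarrow> (nat \<Rightarrow> 'a) set" where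
  "cols C t p S = (\<lambda>(c,r). vecC C p c r) ` (S \<times> {..<t})"

lemma span_of_in_col_span:
  assumes "in_col_span C t p S i" "i < p"
  shows "ev i \<in> vs.span (cols C t p S)"
proof -
  obtain coef where cf: "\<forall>l<p. (\<Sum>c\<in>S. \<Sum>r<t. coef r c * C r c l) = (if l = i then 1 else 0)"
    using assms(1) unfolding in_col_span_def by blast
  have eq: "ev i = (\<Sum>c\<in>S. \<Sum>r<t. vscale (coef r c) (vecC C p c r))"
  proof
    fix l
    show "ev i l = (\<Sum>c\<in>S. \<Sum>r<t. vscale (coef r c) (vecC C p c r)) l"
      using cf assms(2) by (cases "l < p") (auto simp: sum_fun_app ev_def vscale_def vecC_def)
  qed
  show ?thesis unfolding eq
    by (intro vs.span_sum vs.span_scale vs.span_base) (auto simp: cols_def)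
qed

lemma ev_indep: "finite R \<Longrightarrow> vs.independent (ev ` R :: (nat \<Rightarrow> 'a::field) set)"
proof -
  assume True: "finite R"
  show ?thesis
  proof (rule vs.independent_if_scalars_zero)
    show "finite (ev ` R)" using True by simp
    fix f :: "(nat \<Rightarrow> 'a) \<Rightarrow> 'a" and x :: "nat \<Rightarrow> 'a" assume s: "(\<Sum>x\<in>ev ` R. vscale (f x) x) = 0" and x: "x \<in> ev ` R"
    then obtain i where i: "i \<in> R" "x = ev i" by auto
    have inj: "inj_on ev R" by (auto simp: inj_on_def ev_def fun_eq_iff)
    have "0 = (\<Sum>x\<in>ev ` R. vscale (f x) x) i" using s by simp
    also have "\<dots> = (\<Sum>j\<in>R. f (ev j) * ev j i)"
      by (simp add: sum_fun_app sum.reindex[OF inj] vscale_def)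
    also have "\<dots> = (\<Sum>j\<in>R. if j = i then f (ev i) else 0)"
      by (rule sum.cong) (auto simp: ev_def)
    also have "\<dots> = f (ev i)" using True i(1) by simp
    finally show "f x = 0" using i by simp
  qed
qed

lemma ev_inj: "inj_on (ev :: nat \<Rightarrow> (nat \<Rightarrow> 'a::field)) R"
  by (auto simp: inj_on_def ev_def fun_eq_iff)

lemma cols_fin: "finite S \<Longrightarrow> finite (cols C t p S)"
  by (simp add: cols_def)

lemma cols_card1: "card (cols C t p {c}) \<le> t"
proof -
  have "card (cols C t p {c}) \<le> card ({c} \<times> {..<t})"
    unfolding cols_def by (rule card_image_le) simp
  thus ?thesis by (simp add: card_cartesian_product)
qed

lemma card_R_le:
  assumes "R \<subseteq> {..<p}" "\<forall>i\<in>R. (ev i :: nat \<Rightarrow> 'a::field) \<in> vs.span (cols C t p {c})"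
  shows "card R \<le> t"
proof -
  have fR: "finite R" using assms(1) finite_subset by blast
  have "card (ev ` R :: (nat \<Rightarrow> 'a) set) \<le> card (cols C t p {c})"
    using vs.independent_span_bound[OF cols_fin[of "{c}" C t p] ev_indep[OF fR]] assms(2) by auto
  moreover have "card (ev ` R :: (nat \<Rightarrow> 'a) set) = card R" by (rule card_image[OF ev_inj])
  ultimately show ?thesis using cols_card1[of C t p c] by simp
qed

lemma full_span:
  assumes "R \<subseteq> {..<p}" "\<forall>i\<in>R. (ev i :: nat \<Rightarrow> 'a::field) \<in> vs.span (cols C t p {c})"
    and "card R = t"
  shows "vs.span (cols C t p {c}) \<subseteq> vs.span (ev ` R)"
proof
  fix a assume aV: "a \<in> vs.span (cols C t p {c})"
  have fR: "finite R" using assms(1) finite_subset by blast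
  show "a \<in> vs.span (ev ` R)"
  proof (rule ccontr)
    assume na: "a \<notin> vs.span (ev ` R)"
    have ind: "vs.independent (insert a (ev ` R))"
      by (rule vs.independent_insertI[OF na ev_indep[OF fR]])
    have sub: "insert a (ev ` R) \<subseteq> vs.span (cols C t p {c})" using aV assms(2) by auto
    have "card (insert a (ev ` R)) \<le> card (cols C t p {c})"
      using vs.independent_span_bound[OF cols_fin[of "{c}" C t p] ind sub] by simp
    moreover have "a \<notin> ev ` R" using na vs.span_base by blast
    hence "card (insert a (ev ` R)) = Suc t"
      using fR card_image[OF ev_inj, of R] assms(3) by simp
    ultimately show False using cols_card1[of C t p c] by simp
  qed
qed

lemma span_ev_zero:
  "vs.span (ev ` A :: (nat \<Rightarrow> 'a::field) set) \<subseteq> {f. \<forall>l. l \<notin> A \<longrightarrow> f l = 0}"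
  by (rule vs.span_minimal) (auto simp: ev_def vs.subspace_def vscale_def)

lemma pair_impossible:
  assumes "in_col_span (C :: nat \<Rightarrow> nat \<Rightarrow> nat \<Rightarrow> 'a::field) t p {c,c'} i" "i < p"
    and "R \<subseteq> {..<p}" "\<forall>i\<in>R. (ev i :: nat \<Rightarrow> 'a) \<in> vs.span (cols C t p {c})" "card R = t"
    and "R' \<subseteq> {..<p}" "\<forall>i\<in>R'. (ev i :: nat \<Rightarrow> 'a) \<in> vs.span (cols C t p {c'})" "card R' = t"
    and "i \<notin> R" "i \<notin> R'"
  shows False
proof -
  have "cols C t p {c,c'} = cols C t p {c} \<union> cols C t p {c'}" by (auto simp: cols_def)
  moreover have "cols C t p {c} \<subseteq> vs.span (ev ` (R \<union> R'))"
    using full_span[OF assms(3-5)] vs.span_mono[of "ev ` R" "ev ` (R \<union> R')"] vs.span_base[of _ "cols C t p {c}"]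
    by blast
  moreover have "cols C t p {c'} \<subseteq> vs.span (ev ` (R \<union> R'))"
    using full_span[OF assms(6-8)] vs.span_mono[of "ev ` R'" "ev ` (R \<union> R')"] vs.span_base[of _ "cols C t p {c'}"]
    by blast
  ultimately have "vs.span (cols C t p {c,c'}) \<subseteq> vs.span (ev ` (R \<union> R'))"
    by (intro vs.span_minimal) auto
  with span_of_in_col_span[OF assms(1,2)] span_ev_zero[of "R \<union> R'"] assms(9,10)
  have "(ev i :: nat \<Rightarrow> 'a) i = 0" by blast
  thus False by (simp add: ev_def)
qed


definition Rset :: "(nat \<Rightarrow> nat \<Rightarrow> nat \<Rightarrow> 'a::field) \<Rightarrow> nat \<Rightarrow> nat \<Rightarrow> nat \<Rightarrow> nat set" where
  "Rset C t p c = {i. i < p \<and> in_col_span C t p {c} i}"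

definition wt :: "(nat \<Rightarrow> nat \<Rightarrow> nat \<Rightarrow> 'a::field) \<Rightarrow> nat \<Rightarrow> nat \<Rightarrow> nat \<Rightarrow> nat \<Rightarrow> nat \<Rightarrow> real" where
  "wt C t p d c i = (if i \<in> Rset C t p c then 1
     else if card (Rset C t p c) = t then real d / (2 * real d + 1) else (real d + 1) / (2 * real d + 1))"

lemma Rset_sub: "Rset C t p c \<subseteq> {..<p}" by (auto simp: Rset_def)

lemma Rset_span: "\<forall>i\<in>Rset C t p c. ev i \<in> vs.span (cols C t p {c})"
  by (auto simp: Rset_def intro: span_of_in_col_span)

lemma Rset_card: "card (Rset C t p c) \<le> t"
  by (rule card_R_le[OF Rset_sub Rset_span])

lemma q_facts:
  assumes "d \<ge> 1"
  shows "real d / (2 * real d + 1) + (real d + 1) / (2 * real d + 1) = 1"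
    and "1 \<le> 3 * (real d / (2 * real d + 1))"
    and "real d / (2 * real d + 1) \<le> (real d + 1) / (2 * real d + 1)"
    and "real d / (2 * real d + 1) \<le> 1"
    and "0 \<le> real d / (2 * real d + 1)"
proof -
  have pos: "0 < 2 * real d + 1" by simp
  have "real d + (real d + 1) = 2 * real d + 1" by simp
  then show "real d / (2 * real d + 1) + (real d + 1) / (2 * real d + 1) = 1"
    using pos by (simp only: add_divide_distrib[symmetric]) simp
  show "1 \<le> 3 * (real d / (2 * real d + 1))"
    using pos assms by (simp add: field_simps)
  show "real d / (2 * real d + 1) \<le> (real d + 1) / (2 * real d + 1)"
    using pos by (simp add: divide_right_mono)
  show "real d / (2 * real d + 1) \<le> 1" using pos by (simp add: field_simps)
  show "0 \<le> real d / (2 * real d + 1)" by simp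
qed

lemma wt_lb:
  assumes "d \<ge> 1"
  shows "real d / (2 * real d + 1) \<le> wt C t p d c i"
  using q_facts[OF assms] by (auto simp: wt_def)

lemma set_bound:
  fixes C :: "nat \<Rightarrow> nat \<Rightarrow> nat \<Rightarrow> 'a::field"
  assumes "S \<subseteq> {..<m}" "in_col_span C t p S i" "i < p" "d \<ge> 1"
  shows "1 \<le> (\<Sum>c\<in>S. wt C t p d c i)"
proof -
  have fS: "finite S" using assms(1) finite_subset by blast
  have nn: "\<And>c. 0 \<le> wt C t p d c i" using wt_lb[OF assms(4)] q_facts(5)[OF assms(4)] order_trans by blast
  show ?thesis
  proof (cases "\<exists>c\<in>S. i \<in> Rset C t p c")
    case True
    then obtain c where c: "c \<in> S" "i \<in> Rset C t p c" by blast
    have "wt C t p d c i \<le> (\<Sum>c\<in>S. wt C t p d c i)"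
      by (rule member_le_sum[OF c(1)]) (use nn fS in auto)
    thus ?thesis using c by (simp add: wt_def)
  next
    case False
    have "S \<noteq> {}"
    proof
      assume "S = {}"
      with assms(2,3) show False by (auto simp: in_col_span_def)
    qed
    then obtain c where c: "c \<in> S" by blast
    show ?thesis
    proof (cases "S = {c}")
      case True
      then have "i \<in> Rset C t p c" using assms(2,3) by (simp add: Rset_def)
      thus ?thesis using False c by blast
    next
      case False2: False
      then obtain c' where c': "c' \<in> S" "c' \<noteq> c" using c by blast
      show ?thesis
      proof (cases "S = {c,c'}")
        case True
        have ni: "i \<notin> Rset C t p c" "i \<notin> Rset C t p c'" using False c c' by auto
        have sp: "in_col_span C t p {c,c'} i" using assms(2) True by simp
        have nf: "\<not> (card (Rset C t p c) = t \<and> card (Rset C t p c') = t)"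
        proof
          assume a: "card (Rset C t p c) = t \<and> card (Rset C t p c') = t"
          show False
            by (rule pair_impossible[of C t p c c' i "Rset C t p c" "Rset C t p c'",
                  OF sp assms(3) Rset_sub Rset_span conjunct1[OF a] Rset_sub Rset_span conjunct2[OF a] ni])
        qed
        have sum2: "(\<Sum>c\<in>S. wt C t p d c i) = wt C t p d c i + wt C t p d c' i"
          using True c' by simp
        have lb1: "real d / (2 * real d + 1) \<le> wt C t p d c i" "real d / (2 * real d + 1) \<le> wt C t p d c' i"
          by (rule wt_lb[OF assms(4)])+
        show ?thesis
        proof (cases "card (Rset C t p c) = t")
          case True
          then have "card (Rset C t p c') \<noteq> t" using nf by blast
          then have "wt C t p d c' i = (real d + 1) / (2 * real d + 1)" using ni by (simp add: wt_def)
          then show ?thesis using sum2 lb1 q_facts(1)[OF assms(4)] by linarith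
        next
          case False
          then have "wt C t p d c i = (real d + 1) / (2 * real d + 1)" using ni by (simp add: wt_def)
          then show ?thesis using sum2 lb1 q_facts(1)[OF assms(4)] by linarith
        qed
      next
        case False3: False
        then obtain c'' where c'': "c'' \<in> S" "c'' \<noteq> c" "c'' \<noteq> c'" using c c' by blast
        have "(\<Sum>c\<in>{c,c',c''}. wt C t p d c i) \<le> (\<Sum>c\<in>S. wt C t p d c i)"
          by (rule sum_mono2[OF fS]) (use c c' c'' nn in auto)
        moreover have "(\<Sum>c\<in>{c,c',c''}. wt C t p d c i) = wt C t p d c i + wt C t p d c' i + wt C t p d c'' i"
          using c' c'' by simp
        moreover have "real d / (2 * real d + 1) \<le> wt C t p d c i" "real d / (2 * real d + 1) \<le> wt C t p d c' i"
            "real d / (2 * real d + 1) \<le> wt C t p d c'' i"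
          by (rule wt_lb[OF assms(4)])+
        ultimately show ?thesis using q_facts(2)[OF assms(4)] by linarith
      qed
    qed
  qed
qed

lemma per_i:
  fixes C :: "nat \<Rightarrow> nat \<Rightarrow> nat \<Rightarrow> 'a::field"
  assumes "is_pir_array_code C t m p k" "i < p" "d \<ge> 1"
  shows "real k \<le> (\<Sum>c<m. wt C t p d c i)"
proof -
  obtain S where S: "\<forall>j<k. S j \<subseteq> {..<m}" "\<forall>j<k. \<forall>j'<k. j \<noteq> j' \<longrightarrow> S j \<inter> S j' = {}"
    "\<forall>j<k. in_col_span C t p (S j) i"
  proof -
    have "\<forall>i<p. \<exists>S::nat \<Rightarrow> nat set.
        (\<forall>j<k. S j \<subseteq> {..<m}) \<and>
        (\<forall>j<k. \<forall>j'<k. j \<noteq> j' \<longrightarrow> S j \<inter> S j' = {}) \<and>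
        (\<forall>j<k. in_col_span C t p (S j) i)"
      using assms(1) unfolding is_pir_array_code_def .
    then have "\<exists>S::nat \<Rightarrow> nat set.
        (\<forall>j<k. S j \<subseteq> {..<m}) \<and>
        (\<forall>j<k. \<forall>j'<k. j \<noteq> j' \<longrightarrow> S j \<inter> S j' = {}) \<and>
        (\<forall>j<k. in_col_span C t p (S j) i)"
      using assms(2) by simp
    then show ?thesis using that by metis
  qed
  have nn: "\<And>c. 0 \<le> wt C t p d c i" using wt_lb[OF assms(3)] q_facts(5)[OF assms(3)] order_trans by blast
  have fin: "\<forall>j\<in>{..<k}. finite (S j)" using S(1) by (auto intro: finite_subset[where B="{..<m}"])
  have "real k = (\<Sum>j<k. 1)" by simp
  also have "\<dots> \<le> (\<Sum>j<k. \<Sum>c\<in>S j. wt C t p d c i)"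
  proof (rule sum_mono)
    fix j assume "j \<in> {..<k}"
    then have "j < k" by simp
    show "1 \<le> (\<Sum>c\<in>S j. wt C t p d c i)"
      by (rule set_bound[OF S(1)[rule_format, OF \<open>j < k\<close>] S(3)[rule_format, OF \<open>j < k\<close>] assms(2,3)])
  qed
  also have "\<dots> = (\<Sum>c\<in>(\<Union>j\<in>{..<k}. S j). wt C t p d c i)"
    by (rule sum.UNION_disjoint[symmetric]) (use fin S(2) in auto)
  also have "\<dots> \<le> (\<Sum>c<m. wt C t p d c i)"
    by (rule sum_mono2) (use S(1) nn in auto)
  finally show ?thesis .
qed

lemma aux_div: "(z::real) > 0 \<Longrightarrow> x * (y / z) + w = (x * y + w * z) / z"
  by (simp add: field_simps)

lemma per_c:
  assumes "d \<ge> 1" "t \<ge> 1"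
  shows "(\<Sum>i<t+d. wt C t (t+d) d c i) \<le> real t + real d ^ 2 / (2 * real d + 1)"
proof -
  let ?R = "Rset C t (t+d) c"
  let ?f = "if card ?R = t then real d / (2 * real d + 1) else (real d + 1) / (2 * real d + 1)"
  have sub: "?R \<subseteq> {..<t+d}" by (rule Rset_sub)
  have r: "card ?R \<le> t" by (rule Rset_card)
  have "(\<Sum>i<t+d. wt C t (t+d) d c i) = (\<Sum>i\<in>{..<t+d} - ?R. wt C t (t+d) d c i) + (\<Sum>i\<in>?R. wt C t (t+d) d c i)"
    by (rule sum.subset_diff[OF sub]) simp
  also have "\<dots> = (\<Sum>i\<in>{..<t+d} - ?R. ?f) + (\<Sum>i\<in>?R. 1)"
    by (intro arg_cong2[where f="(+)"] sum.cong) (auto simp: wt_def)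
  also have "\<dots> = real (t + d - card ?R) * ?f + real (card ?R)"
    using card_Diff_subset[OF finite_subset[OF sub finite_lessThan] sub] r by simp
  finally have eq: "(\<Sum>i<t+d. wt C t (t+d) d c i) = real (t + d - card ?R) * ?f + real (card ?R)" .
  have pos: "0 < 2 * real d + 1" by simp
  show ?thesis
  proof (cases "card ?R = t")
    case True
    have "real d * (real d / (2 * real d + 1)) = real d ^ 2 / (2 * real d + 1)"
      by (simp add: power2_eq_square)
    then show ?thesis using eq True by simp
  next
    case False
    with r have r1: "real (card ?R) \<le> real t - 1" by linarith
    define r where "r = real (card ?R)"
    have tdr: "real (t + d - card ?R) = real t + real d - r" using r by (simp add: r_def of_nat_diff)
    have h: "0 \<le> real d * (real t - r - 1)" using r1 by (simp add: r_def)
    have num: "(real t + real d - r) * (real d + 1) + r * (2 * real d + 1) \<le> real t * (2 * real d + 1) + real d ^ 2"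
    proof -
      have "real t * (2 * real d + 1) + real d ^ 2 - ((real t + real d - r) * (real d + 1) + r * (2 * real d + 1))
          = real d * (real t - r - 1)"
        by (simp add: power2_eq_square algebra_simps)
      then show ?thesis using h by linarith
    qed
    have "real (t + d - card ?R) * ?f + real (card ?R)
        = ((real t + real d - r) * (real d + 1) + r * (2 * real d + 1)) / (2 * real d + 1)"
      using False pos aux_div[of "2 * real d + 1" "real t + real d - r" "real d + 1" r]
      by (simp add: tdr r_def[symmetric])
    also have "\<dots> \<le> (real t * (2 * real d + 1) + real d ^ 2) / (2 * real d + 1)"
      by (rule divide_right_mono[OF num]) simp
    also have "\<dots> = real t + real d ^ 2 / (2 * real d + 1)"
      using pos by (simp add: add_divide_distrib)
    finally show ?thesis using eq by simp
  qed
qed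


lemma rate_bound:
  fixes C :: "nat \<Rightarrow> nat \<Rightarrow> nat \<Rightarrow> 'a::field"
  assumes code: "is_pir_array_code C t m (t+d) k" and m: "0 < m" and d: "d \<ge> 1" and t: "t \<ge> 1"
  shows "real k / real m \<le> real ((2*d+1)*t + d^2) / real ((t+d)*(2*d+1))"
proof -
  let ?W = "real t + real d ^ 2 / (2 * real d + 1)"
  have "real k * real (t+d) = (\<Sum>i<t+d. real k)" by simp
  also have "\<dots> \<le> (\<Sum>i<t+d. \<Sum>c<m. wt C t (t+d) d c i)"
    by (rule sum_mono) (rule per_i[OF code _ d], simp)
  also have "\<dots> = (\<Sum>c<m. \<Sum>i<t+d. wt C t (t+d) d c i)" by (rule sum.swap)
  also have "\<dots> \<le> (\<Sum>c<m. ?W)"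
    by (rule sum_mono) (rule per_c[OF d t])
  also have "\<dots> = real m * ?W" by simp
  finally have main: "real k * real (t+d) \<le> real m * ?W" .
  have pos: "0 < 2 * real d + 1" by simp
  have tdpos: "0 < real (t+d)" using t by simp
  have "real k / real m \<le> ?W / real (t+d)"
    using main m tdpos by (simp add: divide_le_eq le_divide_eq mult.commute)
  also have "?W / real (t+d) = real ((2*d+1)*t + d^2) / real ((t+d)*(2*d+1))"
  proof -
    have w: "?W = (real t * (2 * real d + 1) + real d ^ 2) / (2 * real d + 1)"
      using pos by (simp add: add_divide_distrib)
    have e1: "real ((2*d+1)*t + d^2) = real t * (2 * real d + 1) + real d ^ 2" by (simp add: algebra_simps)
    have e2: "real ((t+d)*(2*d+1)) = (2 * real d + 1) * real (t+d)" by (simp add: algebra_simps)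
    show ?thesis unfolding w e1 e2 by (simp add: divide_divide_eq_left)
  qed
  finally show ?thesis .
qed

lemma trivial_code:
  assumes "t \<ge> 1"
  shows "is_pir_array_code (\<lambda>r c l. if r = 0 \<and> l = c then (1::'a::field) else 0) t p p 1"
  unfolding is_pir_array_code_def
proof (intro allI impI)
  fix i assume i: "i < p"
  show "\<exists>S::nat \<Rightarrow> nat set. (\<forall>j<1. S j \<subseteq> {..<p}) \<and> (\<forall>j<1. \<forall>j'<1. j \<noteq> j' \<longrightarrow> S j \<inter> S j' = {}) \<and>
      (\<forall>j<1. in_col_span (\<lambda>r c l. if r = 0 \<and> l = c then (1::'a) else 0) t p (S j) i)"
  proof -
    have ics: "in_col_span (\<lambda>r c l. if r = 0 \<and> l = c then (1::'a) else 0) t p {i} i"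
      unfolding in_col_span_def
    proof (intro exI[of _ "\<lambda>r c. 1"] allI impI)
      fix l
      have "(\<Sum>r<t. (1::'a) * (if r = 0 \<and> l = i then 1 else 0)) = (\<Sum>r<t. if r = 0 then (if l = i then 1 else 0) else 0)"
        by (rule sum.cong) auto
      also have "\<dots> = (if l = i then 1 else 0)" using assms by simp
      finally show "(\<Sum>c\<in>{i}. \<Sum>r<t. (1::'a) * (if r = 0 \<and> l = c then 1 else 0)) = (if l = i then 1 else 0)"
        by simp
    qed
    show ?thesis using i ics by (intro exI[of _ "\<lambda>j. {i}"]) (auto simp: less_one)
  qed
qed

theorem theorem4:
  fixes t d :: nat
  assumes "t \<ge> 2" and "d \<ge> 1"
  shows "pir_g TYPE('a::{finite,field}) (1 + of_nat d / of_nat t) t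
           \<le> real ((2*d+1)*t + d^2) / real ((t+d)*(2*d+1))"
proof -
  have t1: "t \<ge> 1" using assms(1) by simp
  have "(1 + of_nat d / of_nat t) * of_nat t = (of_nat (t+d) :: rat)"
    using t1 by (simp add: field_simps)
  then have p: "nat \<lfloor>(1 + of_nat d / of_nat t) * (of_nat t :: rat)\<rfloor> = t + d"
    by (metis floor_of_nat nat_int)
  define X :: "real set" where "X = {real k / real m | k m (C :: nat \<Rightarrow> nat \<Rightarrow> nat \<Rightarrow> 'a).
      0 < m \<and> 0 < k \<and> is_pir_array_code C t m (nat \<lfloor>(1 + of_nat d / of_nat t) * (of_nat t :: rat)\<rfloor>) k}"
  have ne: "X \<noteq> {}"
  proof -
    have tc: "is_pir_array_code (\<lambda>r c l. if r = 0 \<and> l = c then (1::'a) else 0) t (t+d) (t+d) 1"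
      by (rule trivial_code[OF t1])
    have "\<exists>k m (C :: nat \<Rightarrow> nat \<Rightarrow> nat \<Rightarrow> 'a). real 1 / real (t+d) = real k / real m \<and> 0 < m \<and> 0 < k \<and>
        is_pir_array_code C t m (t+d) k"
      by (rule exI[of _ 1], rule exI[of _ "t+d"], rule exI[of _ "\<lambda>r c l. if r = 0 \<and> l = c then (1::'a) else 0"])
         (use tc t1 in simp)
    then have "real 1 / real (t+d) \<in> X"
      unfolding X_def p by blast
    thus ?thesis by blast
  qed
  have "Sup X \<le> real ((2*d+1)*t + d^2) / real ((t+d)*(2*d+1))"
  proof (rule cSup_least[OF ne])
    fix x assume "x \<in> X"
    then obtain k m and C :: "nat \<Rightarrow> nat \<Rightarrow> nat \<Rightarrow> 'a" where
      x: "x = real k / real m" "0 < m" "is_pir_array_code C t m (t+d) k"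
      unfolding X_def p by blast
    show "x \<le> real ((2*d+1)*t + d^2) / real ((t+d)*(2*d+1))"
      using rate_bound[OF x(3) x(2) assms(2) t1] x(1) by simp
  qed
  then show ?thesis unfolding pir_g_def X_def .
qed

end
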